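(* Let $\theta\in\mathbb{R}^d$ parameterize a differentiable model with success probability $P_\theta\in(0,1]$ and score $s(\theta)\triangleq\nabla_\theta\log P_\theta$. Fix $q\in[0,1]$, a target $\delta\in(0,1/2]$ and a constant $C>0$. For $p_0\in(0,\delta)$, let $\theta(t)$ be a solution of the gradient flow $\dot\theta=-\nabla_\theta\ell_q(\theta)$ with $P_{\theta(0)}=p_0$, and suppose $\|s(\theta(t))\|\le C$ for all $t\ge0$. Let $T_q(p_0,\delta)\triangleq\inf\{t\ge0: P_{\theta(t)}\ge\delta\}$. Then $$T_q(p_0,\delta)\ \ge\ \frac{1}{C^2}\int_{p_0}^{\delta}u^{-(2-q)}\,du,$$ and consequently, as $p_0\to0$ (with $q,\delta,C$ fixed), $T_q(p_0,\delta)=\Omega\!\left(\frac{p_0^{-(1-q)}}{1-q}\right)$ for $q\in[0,1)$ and $T_1(p_0,\delta)=\Omega\!\left(\log\frac1{p_0}\right)$.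
   Context: The Tsallis $q$-logarithm is $\log_q(u)=\frac{u^{1-q}-1}{1-q}$ ($q<1$), $\log_1(u)=\log u$, and $\ell_q(\theta)\triangleq-\log_q P_\theta$. *)

theory Defs
  imports "HOL-Analysis.Analysis"
begin

definition tlog :: "real \<Rightarrow> real \<Rightarrow> real" where
  "tlog q u = (if q = 1 then ln u else (u powr (1 - q) - 1) / (1 - q))"

definition grad :: "('a::euclidean_space \<Rightarrow> real) \<Rightarrow> 'a \<Rightarrow> 'a" where
  "grad f x = (\<Sum>b\<in>Basis. frechet_derivative f (at x) b *\<^sub>R b)"

definition tloss :: "real \<Rightarrow> ('a \<Rightarrow> real) \<Rightarrow> 'a \<Rightarrow> real" where
  "tloss q P x = - tlog q (P x)"

text \<open>Hitting time T = inf {t >= 0. P(theta t) >= delta}, in the extended reals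
  (infimum of the empty set is +infinity).\<close>
definition hit_time :: "('a \<Rightarrow> real) \<Rightarrow> (real \<Rightarrow> 'a) \<Rightarrow> real \<Rightarrow> ereal" where
  "hit_time P \<theta> \<delta> = Inf (ereal ` {t. 0 \<le> t \<and> \<delta> \<le> P (\<theta> t)})"

definition flow_ok :: "real \<Rightarrow> ('a::euclidean_space \<Rightarrow> real) \<Rightarrow> real \<Rightarrow> real \<Rightarrow> (real \<Rightarrow> 'a) \<Rightarrow> bool" where
  "flow_ok q P C p0 \<theta> \<longleftrightarrow>
     (\<forall>t\<ge>0. (\<theta> has_vector_derivative (- grad (tloss q P) (\<theta> t))) (at t within {0..}))
     \<and> P (\<theta> 0) = p0
     \<and> (\<forall>t\<ge>0. norm (grad (\<lambda>x. ln (P x)) (\<theta> t)) \<le> C)"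

end

theory Submission
  imports Defs
begin

lemma lin_repr:
  fixes D :: "'a::euclidean_space \<Rightarrow> real"
  assumes "linear D"
  shows "D v = v \<bullet> (\<Sum>b\<in>Basis. D b *\<^sub>R b)"
proof -
  have "D v \<bullet> 1 = (\<Sum>i\<in>Basis. v \<bullet> i * (D i \<bullet> 1))"
    by (rule Linear_Algebra.linear_componentwise[OF assms])
  then show ?thesis by (simp add: inner_sum_right mult.commute)
qed

lemma grad_scaled:
  fixes f :: "'a::euclidean_space \<Rightarrow> real"
  assumes "(f has_derivative (\<lambda>v. c * D v)) (at x)"
  shows "grad f x = c *\<^sub>R (\<Sum>b\<in>Basis. D b *\<^sub>R b)"
proof -
  have "frechet_derivative f (at x) = (\<lambda>v. c * D v)"
    using frechet_derivative_at[OF assms] by simp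
  then show ?thesis unfolding grad_def by (simp add: scaleR_sum_right)
qed

lemma tlog_deriv:
  assumes "0 < u"
  shows "(tlog q has_real_derivative u powr (-q)) (at u)"
proof (cases "q = 1")
  case True
  have "tlog q = ln" using True by (auto simp: tlog_def)
  then show ?thesis using True assms
    by (auto intro!: derivative_eq_intros simp: powr_minus_divide)
next
  case False
  have e: "tlog q = (\<lambda>u. (u powr (1 - q) - 1) / (1 - q))" using False by (auto simp: tlog_def)
  have "((\<lambda>u. (u powr (1 - q) - 1) / (1 - q)) has_real_derivative
          ((1 - q) * u powr (1 - q - 1)) / (1 - q)) (at u)"
    using assms by (auto intro!: derivative_eq_intros)
  then show ?thesis using False unfolding e by simp
qed

lemma comp_tlog_deriv:
  fixes P :: "'a::euclidean_space \<Rightarrow> real"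
  assumes "(P has_derivative D) (at x)" "0 < P x"
  shows "((\<lambda>y. tlog q (P y)) has_derivative (\<lambda>v. P x powr (-q) * D v)) (at x)"
  using DERIV_compose_FDERIV[OF tlog_deriv[OF assms(2)] assms(1)]
  by (simp add: mult.commute)

definition FF :: "real \<Rightarrow> real \<Rightarrow> real" where
  "FF q u = (if q = 1 then ln u else u powr (q - 1) / (q - 1))"

lemma FF_deriv:
  assumes "0 < u"
  shows "(FF q has_real_derivative u powr (q - 2)) (at u)"
proof (cases "q = 1")
  case True
  have "FF q = ln" using True by (auto simp: FF_def)
  then show ?thesis using True assms
    by (auto intro!: derivative_eq_intros simp: powr_minus_divide)
next
  case False
  have e: "FF q = (\<lambda>u. u powr (q - 1) / (q - 1))" using False by (auto simp: FF_def)
  have "((\<lambda>u. u powr (q - 1) / (q - 1)) has_real_derivative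
          ((q - 1) * u powr (q - 1 - 1)) / (q - 1)) (at u)"
    using assms by (auto intro!: derivative_eq_intros)
  then show ?thesis using False unfolding e by simp
qed

lemma FF_mono:
  assumes "0 < a" "a \<le> b" "q \<le> 1"
  shows "FF q a \<le> FF q b"
proof (cases "q = 1")
  case True
  then show ?thesis using assms by (simp add: FF_def)
next
  case False
  then have "q - 1 < 0" using assms by simp
  moreover have "b powr (q - 1) \<le> a powr (q - 1)"
    using powr_mono2'[of "q - 1" a b] assms \<open>q - 1 < 0\<close> by simp
  ultimately show ?thesis using False by (simp add: FF_def divide_right_mono_neg)
qed

lemma FF_integral:
  assumes "0 < a" "a \<le> b"
  shows "integral {a..b} (\<lambda>u. u powr (-(2 - q))) = FF q b - FF q a"
proof -
  have "((\<lambda>u. u powr (q - 2)) has_integral FF q b - FF q a) {a..b}"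
  proof (rule fundamental_theorem_of_calculus[OF assms(2)])
    fix x assume "x \<in> {a..b}"
    then have "0 < x" using assms by auto
    then show "(FF q has_vector_derivative x powr (q - 2)) (at x within {a..b})"
      using FF_deriv[of x q] has_real_derivative_iff_has_vector_derivative
        has_vector_derivative_at_within by blast
  qed
  then show ?thesis by (simp add: integral_unique)
qed

lemma key_bound:
  fixes P :: "'a::euclidean_space \<Rightarrow> real" and q \<delta> C p0 :: real
  assumes P_diff: "\<And>x. P differentiable (at x)"
    and P_range: "\<And>x. 0 < P x"
    and q: "q \<le> 1"
    and \<delta>: "p0 < \<delta>" "0 < p0"
    and fl: "flow_ok q P C p0 \<theta>" and Cpos: "0 < C"
  shows "hit_time P \<theta> \<delta> \<ge> ereal ((FF q \<delta> - FF q p0) / C\<^sup>2)"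
proof -
  define D where "D x = frechet_derivative P (at x)" for x
  define g where "g x = (\<Sum>b\<in>Basis. D x b *\<^sub>R b)" for x
  have HD: "(P has_derivative D x) (at x)" for x
    unfolding D_def using P_diff frechet_derivative_works by blast
  have lin: "linear (D x)" for x
    using has_derivative_bounded_linear[OF HD] bounded_linear.linear by blast
  have Dg: "D x v = v \<bullet> g x" for x v
    unfolding g_def by (rule lin_repr[OF lin])
  have gl: "grad (tloss q P) x = (- (P x powr (-q))) *\<^sub>R g x" for x
  proof -
    have "((\<lambda>y. - tlog q (P y)) has_derivative (\<lambda>v. - (P x powr (-q) * D x v))) (at x)"
      using comp_tlog_deriv[OF HD P_range] by (rule has_derivative_minus)
    then have "(tloss q P has_derivative (\<lambda>v. (- (P x powr (-q))) * D x v)) (at x)"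
      unfolding tloss_def by simp
    then show ?thesis unfolding g_def by (rule grad_scaled)
  qed
  have gs: "grad (\<lambda>y. ln (P y)) x = (P x powr (-1)) *\<^sub>R g x" for x
  proof -
    have "((\<lambda>y. tlog 1 (P y)) has_derivative (\<lambda>v. P x powr (-1) * D x v)) (at x)"
      using comp_tlog_deriv[OF HD P_range, of 1] by simp
    then have "((\<lambda>y. ln (P y)) has_derivative (\<lambda>v. P x powr (-1) * D x v)) (at x)"
      by (simp add: tlog_def)
    then show ?thesis unfolding g_def by (rule grad_scaled)
  qed
  have th: "\<And>t. t \<ge> 0 \<Longrightarrow> (\<theta> has_vector_derivative (P (\<theta> t) powr (-q)) *\<^sub>R g (\<theta> t)) (at t within {0..})"
    using fl gl unfolding flow_ok_def by auto
  have p0: "P (\<theta> 0) = p0" using fl unfolding flow_ok_def by auto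
  have sc: "norm ((P (\<theta> t) powr (-1)) *\<^sub>R g (\<theta> t)) \<le> C" if "t \<ge> 0" for t
    using fl gs that unfolding flow_ok_def by auto
  define h where "h t = FF q (P (\<theta> t)) - C\<^sup>2 * t" for t
  define h' where "h' t = P (\<theta> t) powr (q - 2) * (P (\<theta> t) powr (-q) * (g (\<theta> t) \<bullet> g (\<theta> t))) - C\<^sup>2" for t
  have hd: "(h has_real_derivative h' t) (at t within {0..})" if "t \<ge> 0" for t
  proof -
    have "((P \<circ> \<theta>) has_vector_derivative D (\<theta> t) ((P (\<theta> t) powr (-q)) *\<^sub>R g (\<theta> t))) (at t within {0..})"
      using vector_derivative_diff_chain_within[OF th[OF that] has_derivative_at_withinI[OF HD]] .
    then have "((\<lambda>t. P (\<theta> t)) has_real_derivative P (\<theta> t) powr (-q) * (g (\<theta> t) \<bullet> g (\<theta> t))) (at t within {0..})"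
      by (simp add: Dg has_real_derivative_iff_has_vector_derivative o_def)
    from DERIV_chain2[OF FF_deriv[OF P_range] this]
    have "((\<lambda>t. FF q (P (\<theta> t))) has_real_derivative P (\<theta> t) powr (q - 2) * (P (\<theta> t) powr (-q) * (g (\<theta> t) \<bullet> g (\<theta> t)))) (at t within {0..})" .
    then show ?thesis unfolding h_def h'_def
      by (auto intro!: derivative_eq_intros)
  qed
  have h'le: "h' t \<le> 0" if "t \<ge> 0" for t
  proof -
    let ?p = "P (\<theta> t)" and ?G = "g (\<theta> t)"
    have pp: "0 < ?p" by (rule P_range)
    have "norm ?G / ?p \<le> C" using sc[OF that] pp
      by (simp add: powr_minus_divide divide_inverse mult.commute)
    then have "norm ?G \<le> C * ?p" using pp by (simp add: divide_le_eq)
    then have "norm ?G ^ 2 \<le> (C * ?p) ^ 2" by (intro power_mono) auto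
    then have n2: "?G \<bullet> ?G \<le> C\<^sup>2 * ?p\<^sup>2" by (simp add: power2_norm_eq_inner power_mult_distrib)
    have "?p powr (q - 2) * (?p powr (-q) * (?G \<bullet> ?G)) = (?p powr (q - 2) * ?p powr (-q)) * (?G \<bullet> ?G)"
      by simp
    also have "?p powr (q - 2) * ?p powr (-q) = ?p powr (-2)"
      using pp by (simp add: powr_add[symmetric])
    also have "\<dots> = 1 / ?p\<^sup>2" using pp by (simp add: powr_minus_divide powr_realpow)
    finally have "?p powr (q - 2) * (?p powr (-q) * (?G \<bullet> ?G)) = (?G \<bullet> ?G) / ?p\<^sup>2" by simp
    also have "\<dots> \<le> C\<^sup>2" using n2 pp by (simp add: divide_le_eq)
    finally show ?thesis unfolding h'_def by simp
  qed
  have hmono: "h t \<le> h 0" if tpos: "t > 0" for t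
  proof -
    have hat: "(h has_real_derivative h' x) (at x)" if "x > 0" for x
    proof -
      have "(h has_real_derivative h' x) (at x within {0<..})"
      proof -
        have ss: "{0<..} \<subseteq> {(0::real)..}" by auto
        show ?thesis using DERIV_subset[OF hd[of x] ss] that by simp
      qed
      then show ?thesis using at_within_open[of x "{0<..}"] that by simp
    qed
    have "continuous (at x within {0..}) h" if "x \<in> {0..}" for x
      using hd[of x] that DERIV_continuous by auto
    then have "continuous_on {0..} h" using continuous_on_eq_continuous_within by blast
    then have cont: "continuous_on {0..t} h" by (rule continuous_on_subset) auto
    obtain l z where z: "0 < z" "z < t" "(h has_real_derivative l) (at z)" "h t - h 0 = (t - 0) * l"
      using MVT[OF tpos cont] hat real_differentiable_def by (metis)
    have "l = h' z" using DERIV_unique[OF z(3) hat[OF z(1)]] .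
    then have "l \<le> 0" using h'le[of z] z by simp
    then have "t * l \<le> 0" using tpos by (simp add: mult_nonneg_nonpos)
    then show ?thesis using z(4) by simp
  qed
  have "ereal ((FF q \<delta> - FF q p0) / C\<^sup>2) \<le> ereal t"
    if t: "0 \<le> t" "\<delta> \<le> P (\<theta> t)" for t
  proof -
    have "t \<noteq> 0" using t p0 \<delta> by auto
    then have "h t \<le> h 0" using hmono t by simp
    then have "FF q (P (\<theta> t)) \<le> FF q p0 + C\<^sup>2 * t" using p0 unfolding h_def by simp
    moreover have "FF q \<delta> \<le> FF q (P (\<theta> t))" using FF_mono[OF _ t(2) q] \<delta> by simp
    ultimately have "FF q \<delta> - FF q p0 \<le> C\<^sup>2 * t" by simp
    then show ?thesis using Cpos by (simp add: divide_le_eq mult.commute)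
  qed
  then show ?thesis unfolding hit_time_def by (auto intro!: Inf_greatest)
qed

theorem mainTheorem7:
  fixes P :: "real ^ 'd \<Rightarrow> real" and q \<delta> C :: real
  assumes P_diff: "\<And>x. P differentiable (at x)"
    and P_range: "\<And>x. 0 < P x \<and> P x \<le> 1"
    and q: "0 \<le> q" "q \<le> 1"
    and \<delta>: "0 < \<delta>" "\<delta> \<le> 1/2"
    and C: "0 < C"
  shows "(\<forall>p0 (\<theta> :: real \<Rightarrow> real ^ 'd). 0 < p0 \<and> p0 < \<delta> \<and> flow_ok q P C p0 \<theta> \<longrightarrow>
            hit_time P \<theta> \<delta> \<ge> ereal (1 / C\<^sup>2 * integral {p0..\<delta>} (\<lambda>u. u powr (-(2 - q)))))
       \<and> (q < 1 \<longrightarrow> (\<exists>c>0. \<forall>\<^sub>F p0 in at_right 0. \<forall>\<theta> :: real \<Rightarrow> real ^ 'd.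
            flow_ok q P C p0 \<theta> \<longrightarrow> hit_time P \<theta> \<delta> \<ge> ereal (c * (p0 powr (-(1 - q)) / (1 - q)))))
       \<and> (q = 1 \<longrightarrow> (\<exists>c>0. \<forall>\<^sub>F p0 in at_right 0. \<forall>\<theta> :: real \<Rightarrow> real ^ 'd.
            flow_ok q P C p0 \<theta> \<longrightarrow> hit_time P \<theta> \<delta> \<ge> ereal (c * ln (1 / p0))))"
proof -
  have Ppos: "\<And>x. 0 < P x" using P_range by blast
  have q1: "q \<le> 1" using q by simp
  have part1: "\<forall>p0 (\<theta> :: real \<Rightarrow> real ^ 'd). 0 < p0 \<and> p0 < \<delta> \<and> flow_ok q P C p0 \<theta> \<longrightarrow>
            hit_time P \<theta> \<delta> \<ge> ereal (1 / C\<^sup>2 * integral {p0..\<delta>} (\<lambda>u. u powr (-(2 - q))))"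
  proof (intro allI impI)
    fix p0 and \<theta> :: "real \<Rightarrow> real ^ 'd"
    assume a: "0 < p0 \<and> p0 < \<delta> \<and> flow_ok q P C p0 \<theta>"
    have "integral {p0..\<delta>} (\<lambda>u. u powr (-(2 - q))) = FF q \<delta> - FF q p0"
      using FF_integral a by simp
    then show "hit_time P \<theta> \<delta> \<ge> ereal (1 / C\<^sup>2 * integral {p0..\<delta>} (\<lambda>u. u powr (-(2 - q))))"
      using key_bound[OF P_diff Ppos q1, of p0 \<delta> C \<theta>] a C by simp
  qed
  have part2: "q < 1 \<longrightarrow> (\<exists>c>0. \<forall>\<^sub>F p0 in at_right 0. \<forall>\<theta> :: real \<Rightarrow> real ^ 'd.
            flow_ok q P C p0 \<theta> \<longrightarrow> hit_time P \<theta> \<delta> \<ge> ereal (c * (p0 powr (-(1 - q)) / (1 - q))))"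
  proof
    assume ql: "q < 1"
    have "((\<lambda>x. x powr (1 - q)) \<longlongrightarrow> 0 powr (1 - q)) (at_right (0::real))"
      by (rule tendsto_powr') (auto intro!: tendsto_intros eventually_at_rightI[of 0 1] simp: ql)
    then have "((\<lambda>x. x powr (1 - q)) \<longlongrightarrow> 0) (at_right (0::real))" using ql by simp
    moreover have "0 < \<delta> powr (1 - q) / 2" using \<delta> by simp
    ultimately have ev1: "\<forall>\<^sub>F x in at_right 0. x powr (1 - q) < \<delta> powr (1 - q) / 2"
      by (rule order_tendstoD)
    have ev2: "\<forall>\<^sub>F x in at_right (0::real). 0 < x \<and> x < \<delta>"
      using \<delta> by (auto simp: eventually_at_right_field intro!: exI[of _ \<delta>])
    show "\<exists>c>0. \<forall>\<^sub>F p0 in at_right 0. \<forall>\<theta> :: real \<Rightarrow> real ^ 'd.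
            flow_ok q P C p0 \<theta> \<longrightarrow> hit_time P \<theta> \<delta> \<ge> ereal (c * (p0 powr (-(1 - q)) / (1 - q)))"
    proof (intro exI conjI allI impI)
      show "0 < 1 / (2 * C\<^sup>2)" using C by simp
      show "\<forall>\<^sub>F p0 in at_right 0. \<forall>\<theta> :: real \<Rightarrow> real ^ 'd.
            flow_ok q P C p0 \<theta> \<longrightarrow> hit_time P \<theta> \<delta> \<ge> ereal (1 / (2 * C\<^sup>2) * (p0 powr (-(1 - q)) / (1 - q)))"
        using ev1 ev2
      proof eventually_elim
        case (elim p0)
        show ?case
        proof (intro allI impI)
          fix \<theta> :: "real \<Rightarrow> real ^ 'd"
          assume fl: "flow_ok q P C p0 \<theta>"
          have kb: "hit_time P \<theta> \<delta> \<ge> ereal ((FF q \<delta> - FF q p0) / C\<^sup>2)"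
            using key_bound[OF P_diff Ppos q1, of p0 \<delta> C \<theta>] elim fl C by simp
          have e1: "p0 powr (-(1 - q)) = 1 / p0 powr (1 - q)" using powr_minus_divide[of p0 "1 - q"] by simp
          have e2: "\<delta> powr (q - 1) = 1 / \<delta> powr (1 - q)" using \<delta> powr_minus_divide[of \<delta> "1 - q"] by simp
          have pq: "0 < p0 powr (1 - q)" using elim by simp
          have "2 / \<delta> powr (1 - q) < 1 / p0 powr (1 - q)"
            using elim pq \<delta> by (simp add: divide_simps)
          then have "2 * \<delta> powr (q - 1) \<le> p0 powr (-(1 - q))" using e1 e2 by simp
          then have ineq: "p0 powr (-(1 - q)) / 2 \<le> p0 powr (-(1 - q)) - \<delta> powr (q - 1)" by simp
          have FFd: "FF q \<delta> - FF q p0 = (p0 powr (-(1 - q)) - \<delta> powr (q - 1)) / (1 - q)"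
            using ql by (simp add: FF_def divide_simps) (simp add: algebra_simps)
          have "1 / (2 * C\<^sup>2) * (p0 powr (-(1 - q)) / (1 - q)) = (p0 powr (-(1 - q)) / 2) / (1 - q) / C\<^sup>2"
            by simp
          also have "\<dots> \<le> (p0 powr (-(1 - q)) - \<delta> powr (q - 1)) / (1 - q) / C\<^sup>2"
            using ineq ql C by (intro divide_right_mono) auto
          also have "\<dots> = (FF q \<delta> - FF q p0) / C\<^sup>2" using FFd by simp
          finally show "hit_time P \<theta> \<delta> \<ge> ereal (1 / (2 * C\<^sup>2) * (p0 powr (-(1 - q)) / (1 - q)))"
            using kb order_trans ereal_less_eq(3) by blast
        qed
      qed
    qed
  qed
  have part3: "q = 1 \<longrightarrow> (\<exists>c>0. \<forall>\<^sub>F p0 in at_right 0. \<forall>\<theta> :: real \<Rightarrow> real ^ 'd.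
            flow_ok q P C p0 \<theta> \<longrightarrow> hit_time P \<theta> \<delta> \<ge> ereal (c * ln (1 / p0)))"
  proof
    assume q1': "q = 1"
    have d2: "\<delta>\<^sup>2 < \<delta>" using \<delta> by (simp add: power2_eq_square)
    have ev2: "\<forall>\<^sub>F x in at_right (0::real). 0 < x \<and> x < \<delta>\<^sup>2"
      using \<delta> by (auto simp: eventually_at_right_field intro!: exI[of _ "\<delta>\<^sup>2"])
    show "\<exists>c>0. \<forall>\<^sub>F p0 in at_right 0. \<forall>\<theta> :: real \<Rightarrow> real ^ 'd.
            flow_ok q P C p0 \<theta> \<longrightarrow> hit_time P \<theta> \<delta> \<ge> ereal (c * ln (1 / p0))"
    proof (intro exI conjI allI impI)
      show "0 < 1 / (2 * C\<^sup>2)" using C by simp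
      show "\<forall>\<^sub>F p0 in at_right 0. \<forall>\<theta> :: real \<Rightarrow> real ^ 'd.
            flow_ok q P C p0 \<theta> \<longrightarrow> hit_time P \<theta> \<delta> \<ge> ereal (1 / (2 * C\<^sup>2) * ln (1 / p0))"
        using ev2
      proof eventually_elim
        case (elim p0)
        show ?case
        proof (intro allI impI)
          fix \<theta> :: "real \<Rightarrow> real ^ 'd"
          assume fl: "flow_ok q P C p0 \<theta>"
          have kb: "hit_time P \<theta> \<delta> \<ge> ereal ((FF q \<delta> - FF q p0) / C\<^sup>2)"
            using key_bound[OF P_diff Ppos q1, of p0 \<delta> C \<theta>] elim fl C d2 by simp
          have "ln p0 \<le> ln (\<delta>\<^sup>2)" using elim by (intro ln_mono) auto
          also have "ln (\<delta>\<^sup>2) = 2 * ln \<delta>" using \<delta> by (simp add: ln_realpow)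
          finally have lp: "ln p0 \<le> 2 * ln \<delta>" .
          have "1 / (2 * C\<^sup>2) * ln (1 / p0) = (- ln p0 / 2) / C\<^sup>2" using elim by (simp add: ln_div)
          also have "\<dots> \<le> (ln \<delta> - ln p0) / C\<^sup>2"
            using lp C by (intro divide_right_mono) auto
          also have "\<dots> = (FF q \<delta> - FF q p0) / C\<^sup>2" using q1' by (simp add: FF_def)
          finally show "hit_time P \<theta> \<delta> \<ge> ereal (1 / (2 * C\<^sup>2) * ln (1 / p0))"
            using kb order_trans ereal_less_eq(3) by blast
        qed
      qed
    qed
  qed
  show ?thesis using part1 part2 part3 by blast
qed

end
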